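(* Let $D$ be a distribution over single-qubit states with mean Bloch vector $\vec{\mu} = (0,0,\mu)$, Pauli second moment matrix $\mathcal{S}$ with $\|\mathcal{S}\|_{\mathrm{op}} \le 1-\eta$ for some $\eta \in (0,1)$, and Pauli covariance matrix $\Sigma$. Let $\Delta = \mathrm{diag}\big((1-\mu^2)^{-1/4},(1-\mu^2)^{-1/4},(1-\mu^2)^{-1/2}\big)$. Then there exists $\eta' \in (0,1)$, depending only on $\eta$, such that $\|\Delta\Sigma \Delta\|_{\mathrm{op}} \le 1-\eta'$.
   Context: A single-qubit state is $\rho=\frac12(I+\alpha_xX+\alpha_yY+\alpha_zZ)$ with $\|\vec\alpha\|_2\le 1$ ($X,Y,Z$ the Pauli matrices); $D$ is viewed as a distribution over $\vec\alpha$ with mean Bloch vector $\vec\mu=\mathbb{E}[\vec\alpha]$. The Pauli second moment matrix $\mathcal{S}$ and covariance matrix $\Sigma$ are the $3\times3$ real matrices indexed by $P,Q\in\{X,Y,Z\}$ with $\mathcal{S}_{P,Q}=\mathbb{E}_{\rho\sim D}[\mathrm{tr}(P\rho)\mathrm{tr}(Q\rho)]$ and $\Sigma_{P,Q}=\mathbb{E}_{\rho\sim D}[\mathrm{tr}(P\rho)\mathrm{tr}(Q\rho)]-\mathrm{tr}(P\,\mathbb{E}[\rho])\,\mathrm{tr}(Q\,\mathbb{E}[\rho])$, with rows/columns ordered $X,Y,Z$. *)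

theory Defs
  imports "HOL-Probability.Probability"
begin

text \<open>Bloch vectors are elements of real^3; components 1, 2, 3 correspond to X, Y, Z,
  i.e. a $ 1 = tr(X rho), a $ 2 = tr(Y rho), a $ 3 = tr(Z rho).
  A distribution D over single-qubit states is a probability measure on Bloch vectors
  supported in the closed unit ball.\<close>

definition qubit_distribution :: "(real^3) measure \<Rightarrow> bool" where
  "qubit_distribution M \<longleftrightarrow> prob_space M \<and> sets M = sets borel \<and>
     (AE a in M. norm a \<le> 1)"

definition mean_bloch :: "(real^3) measure \<Rightarrow> real^3" where
  "mean_bloch M = (\<chi> i. \<integral>a. a $ i \<partial>M)"

definition pauli_second_moment :: "(real^3) measure \<Rightarrow> real^3^3" where
  "pauli_second_moment M = (\<chi> i j. \<integral>a. a $ i * a $ j \<partial>M)"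

definition pauli_covariance :: "(real^3) measure \<Rightarrow> real^3^3" where
  "pauli_covariance M = (\<chi> i j. pauli_second_moment M $ i $ j - mean_bloch M $ i * mean_bloch M $ j)"

definition op_norm :: "real^3^3 \<Rightarrow> real" where
  "op_norm A = onorm (\<lambda>x. A *v x)"

definition Delta_mat :: "real \<Rightarrow> real^3^3" where
  "Delta_mat \<mu> = (\<chi> i j. if i = j then (if i = 3 then (1 - \<mu>^2) powr (-1/2)
                                      else (1 - \<mu>^2) powr (-1/4)) else 0)"

end

theory Submission
  imports Defs
begin


lemma quad_cs:
  fixes a b c :: real
  assumes "\<And>t. 0 \<le> a + 2*t*b + t^2*c" and "0 \<le> c"
  shows "b^2 \<le> a*c"
proof (cases "c = 0")
  case True
  have "b = 0"
  proof (rule ccontr)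
    assume "b \<noteq> 0"
    have "0 \<le> a + 2*(-(a+1)/(2*b))*b + (-(a+1)/(2*b))^2*c" by (rule assms(1))
    with True \<open>b \<noteq> 0\<close> show False by (simp add: field_simps)
  qed
  with True show ?thesis by simp
next
  case False
  with assms(2) have cp: "c > 0" by simp
  have "0 \<le> a + 2*(-b/c)*b + (-b/c)^2*c" by (rule assms(1))
  also have "\<dots> = a - b^2/c" using cp by (simp add: field_simps power2_eq_square)
  finally have "b^2/c \<le> a" by simp
  then show ?thesis using cp by (simp add: field_simps)
qed

lemma amgm_comb:
  fixes X Y C p q A B :: real
  assumes "X \<le> p*A" "Y \<le> q*B" "C^2 \<le> X*Y" "0 \<le> X" "0 \<le> Y" "0 \<le> p" "0 \<le> q" "0 \<le> A" "0 \<le> B"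
  shows "X + 2*C + Y \<le> (p+q)*(A+B)"
proof -
  have "X*Y \<le> (p*A)*(q*B)" by (rule mult_mono) (use assms in auto)
  also have "4*((p*A)*(q*B)) \<le> (q*A + p*B)^2"
    using sum_squares_ge_zero[of "q*A - p*B" 0] by (simp add: power2_eq_square algebra_simps)
  finally have "(2*C)^2 \<le> (q*A + p*B)^2" using assms(3) by (simp add: power_mult_distrib)
  then have "2*C \<le> q*A + p*B"
    using assms by (meson abs_le_square_iff abs_ge_self order_trans zero_le_mult_iff add_nonneg_nonneg power2_le_imp_le)
  then show ?thesis using assms by (simp add: algebra_simps)
qed

definition QF :: "real \<Rightarrow> real \<Rightarrow> real \<Rightarrow> real \<Rightarrow> real \<Rightarrow> real \<Rightarrow> real \<Rightarrow> real \<Rightarrow> real \<Rightarrow> real" where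
  "QF s11 s12 s13 s22 s23 s33 x1 x2 x3 =
     s11*x1^2 + s22*x2^2 + s33*x3^2 + 2* s12*x1*x2 + 2* s13*x1*x3 + 2* s23*x2*x3"

lemma key_real:
  fixes s11 s12 s13 s22 s23 s33 \<mu> \<eta> k v1 v2 v3 :: real
  assumes psd: "\<And>x1 x2 x3. (x3*\<mu>)^2 \<le> QF s11 s12 s13 s22 s23 s33 x1 x2 x3"
    and tr: "s11 + s22 + s33 \<le> 1"
    and ub: "\<And>x1 x2 x3. QF s11 s12 s13 s22 s23 s33 x1 x2 x3 \<le> (1-\<eta>)*(x1^2+x2^2+x3^2)"
    and kp: "0 < k" and k4: "k^4 * (1-\<mu>^2) = 1" and e0: "0 < \<eta>" and e1: "\<eta> < 1"
  shows "QF s11 s12 s13 s22 s23 s33 (k* v1) (k* v2) (k^2* v3) - (k^2* v3*\<mu>)^2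
          \<le> (1-\<eta>^2/4)*(v1^2+v2^2+v3^2)"
proof -
  define c where "c = 1 - \<mu>^2"
  define \<sigma> where "\<sigma> = s33 - \<mu>^2"
  have s0: "0 \<le> \<sigma>" using psd[of 1 0 0] by (simp add: QF_def \<sigma>_def)
  have s33b: "s33 \<le> 1 - \<eta>" using ub[of 0 0 1] by (simp add: QF_def)
  have ck: "k^4 * c = 1" using k4 by (simp add: c_def)
  have cle: "c \<le> 1" by (simp add: c_def)
  have sle: "\<sigma> \<le> c - \<eta>" using s33b by (simp add: \<sigma>_def c_def)
  have cpos: "c > 0" using s0 sle e0 by linarith
  have k4ge: "k^4 \<ge> 1"
  proof (rule ccontr)
    assume "\<not> 1 \<le> k^4"
    then have "k^4 * c < 1 * 1" using cle cpos kp by (intro mult_less_le_imp_less) auto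
    with ck show False by simp
  qed
  have kge: "k \<ge> 1"
  proof (rule ccontr)
    assume "\<not> 1 \<le> k"
    then have "k^4 \<le> 1^4" using kp by (intro power_mono) auto
    moreover have "k^4 < 1" using \<open>\<not> 1 \<le> k\<close> kp by (simp add: power_less_one_iff)
    ultimately show False using k4ge by simp
  qed
  have k2: "k^2 \<le> k^4"
  proof -
    have "k^2 * 1 \<le> k^2 * k^2" using kge by (intro mult_left_mono) (auto simp: one_le_power)
    then show ?thesis by (simp add: power_add[symmetric])
  qed
  define w1 where "w1 = k* v1"
  define w2 where "w2 = k* v2"
  define w3 where "w3 = k^2* v3"
  define T where "T = QF s11 s12 s13 s22 s23 s33 w1 w2 w3 - (w3*\<mu>)^2"
  define p where "p = v1^2 + v2^2"
  define q where "q = v3^2"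
  have "T \<le> (1-\<eta>^2/4)*(p+q)"
  proof (cases "\<mu>^2 \<le> \<eta>/2")
    case True
    have "T \<le> QF s11 s12 s13 s22 s23 s33 w1 w2 w3" unfolding T_def by simp
    also have "\<dots> \<le> (1-\<eta>)*(w1^2+w2^2+w3^2)" by (rule ub)
    also have "w1^2+w2^2+w3^2 \<le> k^4 * (p+q)"
    proof -
      have "w1^2+w2^2+w3^2 = k^2*p + k^4*q"
        by (simp add: w1_def w2_def w3_def p_def q_def power_mult_distrib algebra_simps flip: power_mult)
      also have "\<dots> \<le> k^4*p + k^4*q"
        using k2 by (intro add_right_mono mult_right_mono) (auto simp: p_def)
      finally show ?thesis by (simp add: algebra_simps)
    qed
    then have "(1-\<eta>)*(w1^2+w2^2+w3^2) \<le> (1-\<eta>) * (k^4*(p+q))"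
      using e1 by (intro mult_left_mono) auto
    also have "(1-\<eta>) * k^4 \<le> 1-\<eta>^2/4"
    proof -
      have cge: "c \<ge> 1 - \<eta>/2" using True by (simp add: c_def)
      have "1 - \<eta> \<le> (1-\<eta>^2/4)*(1-\<eta>/2)"
      proof -
        have "0 \<le> \<eta> * (1/2 - \<eta>/4 + \<eta>^2/8)"
          using e0 e1 zero_le_power2[of \<eta>] by (intro mult_nonneg_nonneg) linarith+
        then show ?thesis by (simp add: algebra_simps power2_eq_square power3_eq_cube)
      qed
      also have "\<dots> \<le> (1-\<eta>^2/4)*c"
        proof (rule mult_left_mono)
        have "\<eta>^2 \<le> 1" using e0 e1 by (simp add: power_le_one)
        then show "0 \<le> 1-\<eta>^2/4" by simp
      qed (use cge in simp)
      finally have "1-\<eta> \<le> (1-\<eta>^2/4)*c" .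
      then have "(1-\<eta>)*k^4 \<le> (1-\<eta>^2/4)*c*k^4" using kp by (intro mult_right_mono) auto
      also have "\<dots> = 1-\<eta>^2/4" using ck by (simp add: algebra_simps)
      finally show ?thesis .
    qed
    then have "(1-\<eta>) * (k^4*(p+q)) \<le> (1-\<eta>^2/4)*(p+q)"
      by (subst mult.assoc[symmetric], intro mult_right_mono) (auto simp: p_def q_def)
    finally show ?thesis by simp
  next
    case False
    define X where "X = s11*w1^2 + 2* s12*w1*w2 + s22*w2^2"
    define C where "C = w3*(s13*w1 + s23*w2)"
    define Y where "Y = \<sigma>*w3^2"
    have Tsplit: "T = X + 2*C + Y"
      by (simp add: T_def X_def C_def Y_def QF_def \<sigma>_def algebra_simps power2_eq_square)
    have X0: "0 \<le> X" using psd[of 0 w1 w2] by (simp add: X_def QF_def algebra_simps)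
    have Y0: "0 \<le> Y" using s0 by (simp add: Y_def)
    have CS: "C^2 \<le> X*Y"
    proof (rule quad_cs)
      fix t
      show "0 \<le> X + 2*t*C + t^2*Y"
        using psd[of "t*w3" w1 w2] by (simp add: X_def C_def Y_def QF_def \<sigma>_def algebra_simps power2_eq_square)
    qed (rule Y0)
    have "X \<le> (s11+s22)*(w1^2+w2^2)"
      using psd[of 0 w2 "-w1"] by (simp add: X_def QF_def algebra_simps power2_eq_square)
    also have "\<dots> \<le> (c - \<sigma>)*(w1^2+w2^2)"
      using tr by (intro mult_right_mono) (auto simp: c_def \<sigma>_def)
    also have "\<dots> = p * ((c-\<sigma>)*k^2)"
      by (simp add: w1_def w2_def p_def power_mult_distrib algebra_simps)
    finally have Xb: "X \<le> p * ((c-\<sigma>)*k^2)" .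
    have Yb: "Y \<le> q * (\<sigma>*k^4)"
      by (simp add: Y_def w3_def q_def power_mult_distrib flip: power_mult)
    have "T \<le> (p+q)*((c-\<sigma>)*k^2 + \<sigma>*k^4)"
      unfolding Tsplit
      by (rule amgm_comb[OF Xb Yb CS X0 Y0]) (use sle e0 s0 in \<open>auto simp: p_def q_def\<close>)
    also have "(c-\<sigma>)*k^2 + \<sigma>*k^4 \<le> 1-\<eta>^2/4"
    proof -
      define s where "s = c*k^2"
      define t where "t = \<sigma>*k^4"
      have eq: "(c-\<sigma>)*k^2 + \<sigma>*k^4 = 1 - (1-s)*(1-t)"
      proof -
        have "s*t = \<sigma>*(k^4*c)*k^2" unfolding s_def t_def by (simp add: algebra_simps)
        then have "\<sigma>*k^2 = s*t" using ck by simp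
        moreover have "(c-\<sigma>)*k^2 + \<sigma>*k^4 = s - \<sigma>*k^2 + t" by (simp add: s_def t_def algebra_simps)
        ultimately show ?thesis by (simp add: algebra_simps)
      qed
      have t1: "1 - t \<ge> \<eta>"
      proof -
        have "t \<le> (c-\<eta>)*k^4" unfolding t_def using sle by (intro mult_right_mono) auto
        also have "\<dots> = 1 - \<eta>*k^4" using ck by (simp add: algebra_simps)
        also have "\<dots> \<le> 1 - \<eta>"
        proof -
          have "\<eta>*1 \<le> \<eta>*k^4" using k4ge e0 by (intro mult_left_mono) auto
          then show ?thesis by simp
        qed
        finally show ?thesis by simp
      qed
      have s2: "s^2 = c" using ck by (simp add: s_def power_mult_distrib algebra_simps flip: power_mult)
        (simp add: power2_eq_square)
      have clt: "c < 1 - \<eta>/2" using False by (simp add: c_def)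
      have s0': "0 \<le> s" using cpos by (simp add: s_def)
      have s1: "1 - s \<ge> \<eta>/4"
      proof (rule ccontr)
        assume "\<not> \<eta>/4 \<le> 1 - s"
        then have "1 - \<eta>/4 < s" by simp
        then have "(1-\<eta>/4)^2 \<le> s^2" using e1 by (intro power_mono) auto
        moreover have "(1-\<eta>/4)^2 \<ge> 1 - \<eta>/2" by (simp add: power2_eq_square algebra_simps)
        ultimately show False using s2 clt by linarith
      qed
      have "\<eta>/4 * \<eta> \<le> (1-s)*(1-t)" using s1 t1 e0 by (intro mult_mono) auto
      then show ?thesis using eq by (simp add: power2_eq_square)
    qed
    then have "(p+q)*((c-\<sigma>)*k^2 + \<sigma>*k^4) \<le> (p+q)*(1-\<eta>^2/4)"
      by (intro mult_left_mono) (auto simp: p_def q_def)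
    finally show ?thesis by (simp add: algebra_simps)
  qed
  then show ?thesis by (simp add: T_def w1_def w2_def w3_def p_def q_def algebra_simps)
qed


lemma N_expand:
  fixes S :: "real^3^3" and k \<mu> :: real
  assumes s21: "S$2$1 = S$1$2" and s31: "S$3$1 = S$1$3" and s32: "S$3$2 = S$2$3"
  defines "D \<equiv> (\<chi> i j. if i = j then (if i = 3 then k^2 else k) else 0) :: real^3^3"
  defines "Sg \<equiv> (\<chi> i j. S$i$j - vector [0,0,\<mu>] $ i * vector [0,0,\<mu>] $ j) :: real^3^3"
  shows "u \<bullet> ((D ** Sg ** D) *v v) =
     S$1$1*k*k*u$1* v$1 + S$1$2*k*k*(u$1* v$2 + u$2* v$1) + S$2$2*k*k*u$2* v$2
     + S$1$3*k*k^2*(u$1* v$3 + u$3* v$1) + S$2$3*k*k^2*(u$2* v$3 + u$3* v$2)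
     + (S$3$3 - \<mu>^2)*k^2*k^2*u$3* v$3"
  unfolding D_def Sg_def
  by (simp add: matrix_matrix_mult_def matrix_vector_mult_def inner_vec_def sum_3 s21 s31 s32
      algebra_simps power2_eq_square)


lemma psd_onorm:
  fixes N :: "real^3^3"
  assumes sym: "\<And>u v. u \<bullet> (N *v v) = v \<bullet> (N *v u)"
    and psd: "\<And>v. 0 \<le> v \<bullet> (N *v v)"
    and bd: "\<And>v. v \<bullet> (N *v v) \<le> l * (v \<bullet> v)"
  shows "op_norm N \<le> l"
  unfolding op_norm_def
proof (rule onorm_le)
  fix v :: "real^3"
  have cs: "(u \<bullet> (N *v w))^2 \<le> (u \<bullet> (N *v u)) * (w \<bullet> (N *v w))" for u w
  proof (rule quad_cs)
    fix t :: real
    have "0 \<le> (u + t *\<^sub>R w) \<bullet> (N *v (u + t *\<^sub>R w))" by (rule psd)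
    also have "\<dots> = u \<bullet> (N *v u) + 2*t*(u \<bullet> (N *v w)) + t^2 * (w \<bullet> (N *v w))"
      using sym[of w u]
      by (simp add: algebra_simps inner_add_left inner_add_right power2_eq_square)
    finally show "0 \<le> u \<bullet> (N *v u) + 2*t*(u \<bullet> (N *v w)) + t^2 * (w \<bullet> (N *v w))" .
  qed (rule psd)
  define X where "X = (N *v v) \<bullet> (N *v v)"
  define A where "A = (N *v v) \<bullet> (N *v (N *v v))"
  define B where "B = v \<bullet> (N *v v)"
  have X2: "X^2 \<le> A * B" using cs[of "N *v v" v] unfolding X_def A_def B_def by simp
  have A0: "0 \<le> A" "A \<le> l * X" unfolding A_def X_def by (rule psd, rule bd)
  have B0: "0 \<le> B" "B \<le> l * (v \<bullet> v)" unfolding B_def by (rule psd, rule bd)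
  have "A * B \<le> (l * X) * (l * (v \<bullet> v))"
    by (rule mult_mono) (use A0 B0 in auto)
  with X2 have X3: "X * X \<le> X * (l^2 * (v \<bullet> v))" by (simp add: power2_eq_square algebra_simps)
  show "norm (N *v v) \<le> l * norm v"
  proof (cases "X = 0")
    case True
    then have "N *v v = 0" unfolding X_def by simp
    moreover have "0 \<le> l * norm v"
    proof (cases "v = 0")
      case False
      then have "0 < v \<bullet> v" by simp
      from B0 have "0 \<le> l * (v \<bullet> v)" by linarith
      have "0 \<le> l"
      proof (rule ccontr)
        assume "\<not> 0 \<le> l"
        then have "l < 0" by simp
        then have "l * (v \<bullet> v) < 0" using \<open>0 < v \<bullet> v\<close> by (rule mult_neg_pos)
        with B0 show False by linarith
      qed
      then show ?thesis by simp
    qed simp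
    ultimately show ?thesis by simp
  next
    case False
    then have Xp: "X > 0" unfolding X_def by simp
    with X3 have X4: "X \<le> l^2 * (v \<bullet> v)" by simp
    have "0 \<le> l"
    proof (rule ccontr)
      assume "\<not> 0 \<le> l"
      then have "l < 0" by simp
      then have "l*X < 0" using Xp by (rule mult_neg_pos)
      then show False using A0 by linarith
    qed
    have "(norm (N *v v))^2 \<le> (l * norm v)^2"
      using X4 unfolding X_def by (simp add: power_mult_distrib power2_norm_eq_inner)
    then show ?thesis by (rule power2_le_imp_le) (use \<open>0 \<le> l\<close> in simp)
  qed
qed

lemma (in prob_space) sq_int_le:
  fixes f :: "'a \<Rightarrow> real"
  assumes f: "integrable M f" and f2: "integrable M (\<lambda>x. (f x)^2)"
  shows "(\<integral>x. f x \<partial>M)^2 \<le> (\<integral>x. (f x)^2 \<partial>M)"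
proof -
  define c where "c = (\<integral>x. f x \<partial>M)"
  have "0 \<le> (\<integral>x. (f x - c)^2 \<partial>M)" by simp
  also have "(\<integral>x. (f x - c)^2 \<partial>M) = (\<integral>x. (f x)^2 - 2*c*f x + c^2 \<partial>M)"
    by (simp add: power2_eq_square algebra_simps)
  also have "\<dots> = (\<integral>x. (f x)^2 \<partial>M) - 2*c*c + c^2"
    using f f2 by (simp add: c_def prob_space)
  finally show ?thesis by (simp add: c_def power2_eq_square)
qed

theorem mainTheorem7:
  fixes \<eta> :: real
  assumes "0 < \<eta>" and "\<eta> < 1"
  shows "\<exists>\<eta>'. 0 < \<eta>' \<and> \<eta>' < 1 \<and>
    (\<forall>(M :: (real^3) measure) (\<mu> :: real).
       qubit_distribution M \<longrightarrow>
       mean_bloch M = vector [0, 0, \<mu>] \<longrightarrow>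
       op_norm (pauli_second_moment M) \<le> 1 - \<eta> \<longrightarrow>
       op_norm (Delta_mat \<mu> ** pauli_covariance M ** Delta_mat \<mu>) \<le> 1 - \<eta>')"
proof -
  have e2: "\<eta>^2 < 1" using assms by (simp add: power_less_one_iff)
  show ?thesis
  proof (intro exI[of _ "\<eta>^2/4"] conjI allI impI)
    show "0 < \<eta>^2/4" using assms by simp
    show "\<eta>^2/4 < 1" using e2 by simp
    fix M :: "(real^3) measure" and \<mu> :: real
    assume qd: "qubit_distribution M" and mb: "mean_bloch M = vector [0, 0, \<mu>]"
      and on: "op_norm (pauli_second_moment M) \<le> 1 - \<eta>"
    from qd have ps: "prob_space M" and sM: "sets M = sets borel" and ae: "AE a in M. norm a \<le> 1"
      by (auto simp: qubit_distribution_def)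
    interpret prob_space M by (rule ps)
    have meas[measurable]: "(\<lambda>a::real^3. a$i) \<in> borel_measurable M" for i
    proof -
      have "(\<lambda>a::real^3. a$i) \<in> borel_measurable borel" by measurable
      moreover have "M \<rightarrow>\<^sub>M (borel::real measure) = borel \<rightarrow>\<^sub>M borel"
        by (rule measurable_cong_sets[OF sM refl])
      ultimately show ?thesis by simp
    qed
    have ae1: "AE a in M. \<bar>a$i\<bar> \<le> 1" for i
      using ae by eventually_elim (meson component_le_norm_cart order_trans)
    have int1[simp]: "integrable M (\<lambda>a. a$i)" for i
    proof (rule Bochner_Integration.integrable_bound[of _ "\<lambda>_. 1::real"])
      show "AE a in M. norm (a$i) \<le> norm (1::real)" using ae1[of i] by simp
    qed auto
    have int2[simp]: "integrable M (\<lambda>a. a$i * a$j)" for i j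
    proof (rule Bochner_Integration.integrable_bound[of _ "\<lambda>_. 1::real"])
      show "AE a in M. norm (a$i * a$j) \<le> norm (1::real)" using ae1[of i] ae1[of j]
        by eventually_elim (simp add: abs_mult mult_le_one)
    qed auto
    define S where "S = pauli_second_moment M"
    have Sij: "S$i$j = (\<integral>a. a$i * a$j \<partial>M)" for i j by (simp add: S_def pauli_second_moment_def)
    have m1: "(\<integral>a. a$1 \<partial>M) = 0" and m2: "(\<integral>a. a$2 \<partial>M) = 0" and m3: "(\<integral>a. a$3 \<partial>M) = \<mu>"
      using mb by (simp_all add: mean_bloch_def vec_eq_iff forall_3)
    have s21: "S$2$1 = S$1$2" and s31: "S$3$1 = S$1$3" and s32: "S$3$2 = S$2$3"
      by (simp_all add: Sij mult.commute)
    have EQ: "(\<integral>a. (w1*a$1 + w2*a$2 + w3*a$3)^2 \<partial>M) = QF (S$1$1) (S$1$2) (S$1$3) (S$2$2) (S$2$3) (S$3$3) w1 w2 w3" for w1 w2 w3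
    proof -
      have "(\<integral>a. (w1*a$1 + w2*a$2 + w3*a$3)^2 \<partial>M) = (\<integral>a. w1^2*(a$1*a$1) + w2^2*(a$2*a$2) + w3^2*(a$3*a$3)
         + 2*w1*w2*(a$1*a$2) + 2*w1*w3*(a$1*a$3) + 2*w2*w3*(a$2*a$3) \<partial>M)"
        by (rule Bochner_Integration.integral_cong) (simp_all add: power2_eq_square algebra_simps)
      also have "\<dots> = QF (S$1$1) (S$1$2) (S$1$3) (S$2$2) (S$2$3) (S$3$3) w1 w2 w3"
        by (simp add: QF_def Sij power2_eq_square)
      finally show ?thesis .
    qed
    have EL: "(\<integral>a. w1*a$1 + w2*a$2 + w3*a$3 \<partial>M) = w3*\<mu>" for w1 w2 w3
      by (simp add: m1 m2 m3)
    have psd: "(x3*\<mu>)^2 \<le> QF (S$1$1) (S$1$2) (S$1$3) (S$2$2) (S$2$3) (S$3$3) x1 x2 x3" for x1 x2 x3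
    proof -
      have "(\<integral>a. x1*a$1 + x2*a$2 + x3*a$3 \<partial>M)^2 \<le> (\<integral>a. (x1*a$1 + x2*a$2 + x3*a$3)^2 \<partial>M)"
      proof (rule sq_int_le)
        show "integrable M (\<lambda>a. (x1*a$1 + x2*a$2 + x3*a$3)^2)"
        proof -
          have "integrable M (\<lambda>a. x1^2*(a$1*a$1) + x2^2*(a$2*a$2) + x3^2*(a$3*a$3)
            + 2*x1*x2*(a$1*a$2) + 2*x1*x3*(a$1*a$3) + 2*x2*x3*(a$2*a$3))" by simp
          moreover have "(\<lambda>a::real^3. x1^2*(a$1*a$1) + x2^2*(a$2*a$2) + x3^2*(a$3*a$3)
            + 2*x1*x2*(a$1*a$2) + 2*x1*x3*(a$1*a$3) + 2*x2*x3*(a$2*a$3)) = (\<lambda>a. (x1*a$1 + x2*a$2 + x3*a$3)^2)"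
            by (simp add: fun_eq_iff power2_eq_square algebra_simps)
          ultimately show ?thesis by simp
        qed
      qed simp
      then show ?thesis using EQ EL by simp
    qed
    have tr: "S$1$1 + S$2$2 + S$3$3 \<le> 1"
    proof -
      have "S$1$1 + S$2$2 + S$3$3 = (\<integral>a. a$1*a$1 + a$2*a$2 + a$3*a$3 \<partial>M)" by (simp add: Sij)
      also have "\<dots> \<le> (\<integral>a. 1 \<partial>M)"
      proof (rule integral_mono_AE)
        show "AE a in M. a$1*a$1 + a$2*a$2 + a$3*a$3 \<le> 1" using ae
        proof eventually_elim
          case (elim a)
          have "(norm a)^2 \<le> 1" using elim by (simp add: power_le_one)
          then show ?case by (simp add: power2_norm_eq_inner inner_vec_def sum_3)
        qed
      qed simp_all
      finally show ?thesis by (simp add: prob_space)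
    qed
    have ub: "QF (S$1$1) (S$1$2) (S$1$3) (S$2$2) (S$2$3) (S$3$3) x1 x2 x3 \<le> (1-\<eta>)*(x1^2+x2^2+x3^2)" for x1 x2 x3
    proof -
      define w :: "real^3" where "w = vector [x1, x2, x3]"
      have "QF (S$1$1) (S$1$2) (S$1$3) (S$2$2) (S$2$3) (S$3$3) x1 x2 x3 = w \<bullet> (S *v w)"
        by (simp add: w_def QF_def matrix_vector_mult_def inner_vec_def sum_3 s21 s31 s32 algebra_simps power2_eq_square)
      also have "\<dots> \<le> norm w * norm (S *v w)" by (rule norm_cauchy_schwarz)
      also have "\<dots> \<le> norm w * (op_norm S * norm w)"
        unfolding op_norm_def by (intro mult_left_mono onorm) auto
      also have "\<dots> \<le> norm w * ((1-\<eta>) * norm w)"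
        using on unfolding S_def by (intro mult_left_mono mult_right_mono) auto
      also have "\<dots> = (1-\<eta>)*(norm w)^2" by (simp add: power2_eq_square)
      also have "(norm w)^2 = x1^2+x2^2+x3^2"
        unfolding power2_norm_eq_inner by (simp add: inner_vec_def sum_3 w_def power2_eq_square)
      finally show ?thesis .
    qed
    define c where "c = 1 - \<mu>^2"
    have cpos: "c > 0" using psd[of 1 0 0] ub[of 0 0 1] assms by (simp add: QF_def c_def)
    define k where "k = c powr (-1/4)"
    have kp: "k > 0" using cpos by (simp add: k_def)
    have k2: "k^2 = c powr (-1/2)" using cpos by (simp add: k_def powr_power)
    have k4: "k^4 * (1-\<mu>^2) = 1"
    proof -
      have "k^4 = c powr (-1)" using cpos by (simp add: k_def powr_power)
      then show ?thesis using cpos by (simp add: c_def[symmetric] powr_minus field_simps)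
    qed
    have Dm: "Delta_mat \<mu> = (\<chi> i j. if i = j then (if i = 3 then k^2 else k) else 0)"
    proof -
      have "(1 - \<mu>^2) powr (-1/2) = k^2" "(1 - \<mu>^2) powr (-1/4) = k"
        using k2 by (simp_all add: k_def c_def)
      then show ?thesis unfolding Delta_mat_def by (simp only:)
    qed
    have Cm: "pauli_covariance M = (\<chi> i j. S$i$j - vector [0,0,\<mu>] $ i * vector [0,0,\<mu>] $ j)"
      by (simp add: pauli_covariance_def S_def mb)
    define NN where "NN = ((\<chi> i j. if i = j then (if i = 3 then k^2 else k) else 0) **
       (\<chi> i j. S$i$j - vector [0,0,\<mu>] $ i * vector [0,0,\<mu>] $ j) **
       (\<chi> i j. if i = j then (if i = 3 then k^2 else k) else 0) :: real^3^3)"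
    show "op_norm (Delta_mat \<mu> ** pauli_covariance M ** Delta_mat \<mu>) \<le> 1 - \<eta>^2/4"
      unfolding Dm Cm NN_def[symmetric]
    proof (rule psd_onorm)
      fix u v :: "real^3"
      show "u \<bullet> (NN *v v) = v \<bullet> (NN *v u)"
        unfolding NN_def N_expand[OF s21 s31 s32] by (simp add: algebra_simps)
      show "0 \<le> v \<bullet> (NN *v v)"
        unfolding NN_def N_expand[OF s21 s31 s32]
        using psd[of "k^2* v$3" "k* v$1" "k* v$2"] by (simp add: QF_def algebra_simps power2_eq_square)
      show "v \<bullet> (NN *v v) \<le> (1 - \<eta>^2/4) * (v \<bullet> v)"
        unfolding NN_def N_expand[OF s21 s31 s32]
        using key_real[OF psd tr ub kp k4 assms, of "v$1" "v$2" "v$3"]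
        by (simp add: QF_def algebra_simps power2_eq_square inner_vec_def sum_3)
    qed
  qed
qed

end
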